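(* Let $J_-,J_+\subset\mathbb Z$ be disjoint finite arithmetic progressions with the same common difference and $J=J_-\cup J_+$. If $\mathcal D\in\mathrm{DO}_n(J)$ corresponds to a generic twisted $J$-corrugated $n$-gon and $\tilde{\mathcal D}\in\mathrm{DO}_n(J)$ satisfies $\tilde{\mathcal D}_+\mathcal D_-=\tilde{\mathcal D}_-\mathcal D_+$ (so that $\tilde{\mathcal D}$ corresponds to the image under the pentagram map associated with $(J_-,J_+)$), then $$\tilde{\mathcal L}(z)=\tilde{\mathcal D}_-(z)^{-1}\tilde{\mathcal D}_+(z)=\mathcal D_+(z)\mathcal D_-(z)^{-1}.$$ Thus, in terms of the Lax operator $\mathcal L(z)=\mathcal D_-(z)^{-1}\mathcal D_+(z)$ (as an element of $\widetilde{\mathrm{GL}}_n/(\mathrm{Ad}\,\mathbb T\times\mathbb R^* )$), the pentagram map is the refactorization $\mathcal D_-^{-1}(z)\mathcal D_+(z)\mapsto\mathcal D_+(z)\mathcal D_-^{-1}(z)$, i.e. it admits the Lax representation with spectral parameter $\mathcal L(z)\mapsto\mathcal D_+(z)\mathcal L(z)\mathcal D_+(z)^{-1}$.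
   Context: A scalar operator is a bi-infinite real sequence $a=(a_i)$ acting by $(aV)_i=a_iV_i$; $T$ is the left shift. An $n$-periodic difference operator is a finite sum $\sum_j a^{(j)}T^j$ with $n$-periodic coefficients; $\mathrm{DO}_n(J)$ consists of those of the form $\sum_{j\in J}a^{(j)}T^j$; for such $\mathcal D$, $\mathcal D_\pm=\sum_{j\in J_\pm}a^{(j)}T^j$. $\mathcal D(z)$ is the matrix Laurent polynomial obtained by sending a scalar operator $a$ to $\mathrm{diag}(a_1,\dots,a_n)$ and $T$ to the matrix with $1$'s at positions $(i,i+1)$ and $z$ at $(n,1)$. $\widetilde{\mathrm{GL}}_n$ is the group of invertible matrix-valued rational functions of $z$; $\mathrm{Ad}\,\mathbb T$ denotes conjugation by constant invertible diagonal matrices and $\mathbb R^*$ acts by $z\mapsto tz$. For $d=\max J-\min J-1$, a twisted $J$-corrugated $n$-gon is a sequence $v_i\in\mathbb{RP}^d$ with $v_{i+n}=M(v_i)$ ($M$ projective) such that for each $i$ the points $v_{i+j}$, $j\in J$, lie in a projective subspace of dimension $|J|-2$; $\mathcal D$ corresponds to it if $\mathcal DV=0$ for a lift $V$. The pentagram map associated with $(J_-,J_+)$ is $\tilde v_i=\mathrm{span}\{v_{i+j}:j\in J_-\}\cap\mathrm{span}\{v_{i+j}:j\in J_+\}$. *)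

theory Defs
  imports "Jordan_Normal_Form.Determinant"
begin

text \<open>Periodic difference operators are encoded by a coefficient family
  a :: int => int => real, where a j i is the i-th entry of the scalar operator
  a^(j), together with a finite set S of shifts; the operator is
  sum over j in S of a^(j) T^j, with T the left shift, (T V)_i = V_(i+1).\<close>

definition periodic_coeffs :: "nat \<Rightarrow> (int \<Rightarrow> int \<Rightarrow> real) \<Rightarrow> bool" where
  "periodic_coeffs n a \<longleftrightarrow> (\<forall>j i. a j (i + int n) = a j i)"

definition DO_apply :: "(int \<Rightarrow> int \<Rightarrow> real) \<Rightarrow> int set \<Rightarrow> (int \<Rightarrow> real) \<Rightarrow> int \<Rightarrow> real" where
  "DO_apply a S V i = (\<Sum>j\<in>S. a j i * V (i + j))"

text \<open>The matrix Laurent polynomial D(z) of sum_{j in S} a^(j) T^j (evaluated at z /= 0).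
  Row/column k (0-based) corresponds to position k+1; T^j has entry z^q at (p,s)
  when p + j = s + q n, with 1 <= p,s <= n.\<close>
definition DO_mat :: "nat \<Rightarrow> (int \<Rightarrow> int \<Rightarrow> real) \<Rightarrow> int set \<Rightarrow> real \<Rightarrow> real mat" where
  "DO_mat n a S z = mat n n (\<lambda>(p, s).
     (\<Sum>j\<in>{j\<in>S. (int p + j - int s) mod int n = 0}.
        a j (int p + 1) * z powi ((int p + j - int s) div int n)))"

definition mat_inv :: "real mat \<Rightarrow> real mat" where
  "mat_inv A = (SOME B. inverts_mat A B \<and> inverts_mat B A)"

definition arith_prog :: "int set \<Rightarrow> int \<Rightarrow> bool" where
  "arith_prog A k \<longleftrightarrow> (\<exists>a (p::nat). p \<ge> 1 \<and> A = {a + int m * k | m. m < p})"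

definition lin_dep_family :: "nat \<Rightarrow> int set \<Rightarrow> (int \<Rightarrow> real vec) \<Rightarrow> bool" where
  "lin_dep_family m S W \<longleftrightarrow>
     (\<exists>c. (\<exists>j\<in>S. c j \<noteq> 0) \<and> (\<forall>k<m. (\<Sum>j\<in>S. c j * (W j $ k)) = 0))"

text \<open>V is a lift (to R^m, m = d+1) of a twisted n-gon in RP^d: nonzero vectors with
  v_(i+n) = M(v_i) for a projective transformation M (lifted to an invertible matrix).\<close>
definition twisted_lift :: "nat \<Rightarrow> nat \<Rightarrow> (int \<Rightarrow> real vec) \<Rightarrow> bool" where
  "twisted_lift m n V \<longleftrightarrow>
     (\<forall>i. V i \<in> carrier_vec m \<and> V i \<noteq> 0\<^sub>v m) \<and>
     (\<exists>M. M \<in> carrier_mat m m \<and> invertible_mat M \<and>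
        (\<forall>i. \<exists>c. c \<noteq> 0 \<and> V (i + int n) = c \<cdot>\<^sub>v (M *\<^sub>v V i)))"

text \<open>J-corrugated: for each i the points v_(i+j), j in J, lie in a projective subspace
  of dimension |J|-2, i.e. the vectors V_(i+j), j in J, are linearly dependent.\<close>
definition corrugated :: "nat \<Rightarrow> int set \<Rightarrow> (int \<Rightarrow> real vec) \<Rightarrow> bool" where
  "corrugated m J V \<longleftrightarrow> (\<forall>i. lin_dep_family m J (\<lambda>j. V (i + j)))"

text \<open>Genericity: for each i, any |J|-1 of the points v_(i+j), j in J, are in general
  position (their lifts are linearly independent).\<close>
definition generic_corrugated :: "nat \<Rightarrow> int set \<Rightarrow> (int \<Rightarrow> real vec) \<Rightarrow> bool" where
  "generic_corrugated m J V \<longleftrightarrow>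
     corrugated m J V \<and> (\<forall>i. \<forall>j0\<in>J. \<not> lin_dep_family m (J - {j0}) (\<lambda>j. V (i + j)))"

text \<open>The (nondegenerate) operator sum_{j in J} a^(j) T^j corresponds to a generic twisted
  J-corrugated n-gon in RP^d, d = max J - min J - 1: it annihilates some lift V.\<close>
definition corresponds_generic :: "nat \<Rightarrow> int set \<Rightarrow> (int \<Rightarrow> int \<Rightarrow> real) \<Rightarrow> bool" where
  "corresponds_generic n J a \<longleftrightarrow>
     (\<forall>i. \<exists>j\<in>J. a j i \<noteq> 0) \<and>
     (\<exists>V. twisted_lift (nat (Max J - Min J)) n V \<and>
          generic_corrugated (nat (Max J - Min J)) J V \<and>
          (\<forall>k < nat (Max J - Min J). \<forall>i. DO_apply a J (\<lambda>l. V l $ k) i = 0))"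

end

theory Submission imports Defs begin


lemma qp_nat:
  fixes V :: "int \<Rightarrow> real"
  assumes "\<forall>i. V (i + int n) = z * V i"
  shows "V (i + int m * int n) = z ^ m * V i"
proof (induction m)
  case 0 then show ?case by simp
next
  case (Suc m)
  have "V (i + int (Suc m) * int n) = V ((i + int m * int n) + int n)" by (simp add: algebra_simps)
  also have "\<dots> = z * V (i + int m * int n)" using assms by blast
  finally show ?case using Suc by simp
qed

lemma qp_int:
  fixes V :: "int \<Rightarrow> real"
  assumes "\<forall>i. V (i + int n) = z * V i" "z \<noteq> 0"
  shows "V (i + q * int n) = z powi q * V i"
proof (cases "q \<ge> 0")
  case True
  then obtain m where "q = int m" by (intro that[of "nat q"]) simp
  then show ?thesis using qp_nat[OF assms(1)] by (simp add: power_int_def)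
next
  case False
  then obtain m where m: "q = - int m" by (intro that[of "nat (-q)"]) simp
  have "V i = V ((i + q * int n) + int m * int n)" using m by (simp add: algebra_simps)
  also have "\<dots> = z ^ m * V (i + q * int n)" using qp_nat[OF assms(1)] by blast
  finally have "V (i + q * int n) = V i / z ^ m" using assms(2) by (simp add: field_simps)
  then show ?thesis using m by (simp add: power_int_minus divide_inverse mult.commute)
qed

lemma DO_mat_carrier: "DO_mat n a S z \<in> carrier_mat n n"
  by (simp add: DO_mat_def)

lemma DO_mat_dims[simp]: "dim_row (DO_mat n a S z) = n" "dim_col (DO_mat n a S z) = n"
  by (simp_all add: DO_mat_def)

lemma qp_apply:
  fixes V :: "int \<Rightarrow> real"
  assumes "n \<ge> 1" "finite S" "z \<noteq> 0" "\<forall>i. V (i + int n) = z * V i" "p < n"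
  shows "(DO_mat n a S z *\<^sub>v vec n (\<lambda>s. V (int s + 1))) $ p = DO_apply a S V (int p + 1)"
proof -
  have "(DO_mat n a S z *\<^sub>v vec n (\<lambda>s. V (int s + 1))) $ p
     = (\<Sum>s<n. DO_mat n a S z $$ (p, s) * V (int s + 1))"
    using assms(5) by (simp add: mult_mat_vec_def scalar_prod_def atLeast0LessThan)
  also have "\<dots> = (\<Sum>s<n. (\<Sum>j\<in>{j\<in>S. (int p + j - int s) mod int n = 0}.
        a j (int p + 1) * z powi ((int p + j - int s) div int n)) * V (int s + 1))"
    using assms(5) by (intro sum.cong refl) (simp add: DO_mat_def)
  also have "\<dots> = (\<Sum>s<n. \<Sum>j\<in>S. if (int p + j - int s) mod int n = 0 then
        a j (int p + 1) * z powi ((int p + j - int s) div int n) * V (int s + 1) else 0)"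
  proof (intro sum.cong refl)
    fix s
    show "(\<Sum>j\<in>{j\<in>S. (int p + j - int s) mod int n = 0}.
        a j (int p + 1) * z powi ((int p + j - int s) div int n)) * V (int s + 1) =
      (\<Sum>j\<in>S. if (int p + j - int s) mod int n = 0 then
        a j (int p + 1) * z powi ((int p + j - int s) div int n) * V (int s + 1) else 0)"
      by (subst sum.inter_filter[OF assms(2)]) (auto simp: sum_distrib_right intro!: sum.cong)
  qed
  also have "\<dots> = (\<Sum>j\<in>S. \<Sum>s<n. if (int p + j - int s) mod int n = 0 then
        a j (int p + 1) * z powi ((int p + j - int s) div int n) * V (int s + 1) else 0)"
    by (rule sum.swap)
  also have "\<dots> = (\<Sum>j\<in>S. a j (int p + 1) * V (int p + 1 + j))"
  proof (rule sum.cong[OF refl])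
    fix j assume "j \<in> S"
    define s0 where "s0 = nat ((int p + j) mod int n)"
    have s0: "s0 < n" "int s0 = (int p + j) mod int n" using assms(1) unfolding s0_def
      by (auto simp: nat_less_iff)
    have eq1: "s = s0" if "s < n" "(int p + j - int s) mod int n = 0" for s
    proof -
      from that have "int n dvd (int p + j - int s)" by (simp add: mod_0_imp_dvd)
      then have "int s mod int n = (int p + j) mod int n"
        by (simp add: mod_eq_dvd_iff dvd_diff_commute)
      then show "s = s0" using s0 \<open>s < n\<close> by simp
    qed
    have eq2: "(int p + j - int s0) mod int n = 0" by (simp only: s0(2) mod_diff_right_eq) simp
    have eq: "{s\<in>{..<n}. (int p + j - int s) mod int n = 0} = {s0}"
    proof (rule Set.set_eqI)
      fix s show "s \<in> {s\<in>{..<n}. (int p + j - int s) mod int n = 0} \<longleftrightarrow> s \<in> {s0}"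
        using eq1[of s] eq2 s0(1) by auto
    qed
    have "(\<Sum>s<n. if (int p + j - int s) mod int n = 0 then
        a j (int p + 1) * z powi ((int p + j - int s) div int n) * V (int s + 1) else 0)
      = (\<Sum>s\<in>{s\<in>{..<n}. (int p + j - int s) mod int n = 0}.
        a j (int p + 1) * z powi ((int p + j - int s) div int n) * V (int s + 1))"
      by (rule sum.inter_filter[symmetric]) simp
    also have "\<dots> = a j (int p + 1) * (z powi ((int p + j - int s0) div int n) * V (int s0 + 1))"
      unfolding eq by simp
    also have "z powi ((int p + j - int s0) div int n) * V (int s0 + 1) = V (int p + 1 + j)"
    proof -
      have d: "int p + j - int s0 = ((int p + j - int s0) div int n) * int n"
        using eq2 by (metis dvd_eq_mod_eq_0 dvd_div_mult_self)
      have "V (int s0 + 1 + ((int p + j - int s0) div int n) * int n) = z powi ((int p + j - int s0) div int n) * V (int s0 + 1)"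
        by (rule qp_int[OF assms(4) assms(3)])
      moreover have "int s0 + 1 + ((int p + j - int s0) div int n) * int n = int p + 1 + j"
        using d by linarith
      ultimately show ?thesis by simp
    qed
    finally show "(\<Sum>s<n. if (int p + j - int s) mod int n = 0 then
        a j (int p + 1) * z powi ((int p + j - int s) div int n) * V (int s + 1) else 0)
      = a j (int p + 1) * V (int p + 1 + j)" .
  qed
  also have "\<dots> = DO_apply a S V (int p + 1)" unfolding DO_apply_def by simp
  finally show ?thesis .
qed


lemma act_vec:
  fixes V :: "int \<Rightarrow> real"
  assumes "n \<ge> 1" "finite S" "z \<noteq> 0" "\<forall>i. V (i + int n) = z * V i"
  shows "DO_mat n a S z *\<^sub>v vec n (\<lambda>s. V (int s + 1)) = vec n (\<lambda>s. DO_apply a S V (int s + 1))"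
proof (rule eq_vecI)
  fix i assume "i < dim_vec (vec n (\<lambda>s. DO_apply a S V (int s + 1)))"
  then have i: "i < n" by simp
  have "(DO_mat n a S z *\<^sub>v vec n (\<lambda>s. V (int s + 1))) $ i = DO_apply a S V (int i + 1)"
    by (rule qp_apply[OF assms i])
  also have "\<dots> = vec n (\<lambda>s. DO_apply a S V (int s + 1)) $ i" using i by simp
  finally show "(DO_mat n a S z *\<^sub>v vec n (\<lambda>s. V (int s + 1))) $ i = vec n (\<lambda>s. DO_apply a S V (int s + 1)) $ i" .
qed simp

lemma DO_qp:
  fixes V :: "int \<Rightarrow> real"
  assumes "periodic_coeffs n a" "\<forall>i. V (i + int n) = z * V i"
  shows "\<forall>i. DO_apply a S V (i + int n) = z * DO_apply a S V i"
proof
  fix i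
  have "DO_apply a S V (i + int n) = (\<Sum>j\<in>S. a j i * (z * V (i + j)))"
    unfolding DO_apply_def
  proof (intro sum.cong refl)
    fix j
    have "a j (i + int n) = a j i" using assms(1) unfolding periodic_coeffs_def by blast
    moreover have "V (i + int n + j) = z * V (i + j)" using assms(2)
      by (metis add.commute add.left_commute)
    ultimately show "a j (i + int n) * V (i + int n + j) = a j i * (z * V (i + j))" by simp
  qed
  also have "\<dots> = z * DO_apply a S V i" unfolding DO_apply_def
    by (simp add: sum_distrib_left algebra_simps)
  finally show "DO_apply a S V (i + int n) = z * DO_apply a S V i" .
qed

lemma ext_vec:
  fixes z :: real and v :: "real vec"
  assumes "n \<ge> 1" "z \<noteq> 0" "v \<in> carrier_vec n"
  defines "V \<equiv> (\<lambda>i::int. z powi ((i - 1) div int n) * v $ nat ((i - 1) mod int n))"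
  shows "\<forall>i. V (i + int n) = z * V i" "vec n (\<lambda>s. V (int s + 1)) = v"
proof -
  show "\<forall>i. V (i + int n) = z * V i"
  proof
    fix i
    have e: "i + int n - 1 = (i - 1) + int n" by simp
    have "(i + int n - 1) div int n = (i - 1) div int n + 1" using assms(1)
      unfolding e by (subst div_add_self2) auto
    moreover have "(i + int n - 1) mod int n = (i - 1) mod int n"
      unfolding e by (rule mod_add_self2)
    ultimately show "V (i + int n) = z * V i" unfolding V_def using assms(2)
      by (simp add: power_int_add_1)
  qed
  show "vec n (\<lambda>s. V (int s + 1)) = v"
    using assms(3) by (intro eq_vecI) (auto simp: V_def)
qed

lemma mat_entry_unit:
  fixes M :: "real mat"
  assumes "M \<in> carrier_mat n n" "i < n" "j < n"
  shows "(M *\<^sub>v unit_vec n j) $ i = M $$ (i, j)"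
proof -
  have "(M *\<^sub>v unit_vec n j) $ i = (\<Sum>ia = 0..<n. M $$ (i, ia) * (if ia = j then 1 else 0))"
    using assms by (simp add: mult_mat_vec_def scalar_prod_def unit_vec_def)
  also have "\<dots> = (\<Sum>ia = 0..<n. if ia = j then M $$ (i, ia) else 0)" by (intro sum.cong) auto
  also have "\<dots> = M $$ (i, j)" using assms(3) by (simp add: sum.delta')
  finally show ?thesis .
qed

lemma refac_mat:
  assumes "n \<ge> 1" "z \<noteq> 0" "finite Jm" "finite Jp" "periodic_coeffs n a" "periodic_coeffs n b"
    and H: "\<forall>V. DO_apply b Jp (DO_apply a Jm V) = DO_apply b Jm (DO_apply a Jp V)"
  shows "DO_mat n b Jp z * DO_mat n a Jm z = DO_mat n b Jm z * DO_mat n a Jp z"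
proof -
  have vv: "(DO_mat n b Jp z * DO_mat n a Jm z) *\<^sub>v v = (DO_mat n b Jm z * DO_mat n a Jp z) *\<^sub>v v"
    if v: "v \<in> carrier_vec n" for v
  proof -
    define V where "V \<equiv> (\<lambda>i::int. z powi ((i - 1) div int n) * v $ nat ((i - 1) mod int n))"
    have qV: "\<forall>i. V (i + int n) = z * V i" and vV: "vec n (\<lambda>s. V (int s + 1)) = v"
      using ext_vec[OF assms(1,2) v] unfolding V_def by blast+
    have qA1: "\<forall>i. DO_apply a Jm V (i + int n) = z * DO_apply a Jm V i" by (rule DO_qp[OF assms(5) qV])
    have qA2: "\<forall>i. DO_apply a Jp V (i + int n) = z * DO_apply a Jp V i" by (rule DO_qp[OF assms(5) qV])
    have "(DO_mat n b Jp z * DO_mat n a Jm z) *\<^sub>v v = DO_mat n b Jp z *\<^sub>v (DO_mat n a Jm z *\<^sub>v v)"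
      using v by (simp add: assoc_mult_mat_vec[OF DO_mat_carrier DO_mat_carrier v])
    also have "\<dots> = vec n (\<lambda>s. DO_apply b Jp (DO_apply a Jm V) (int s + 1))"
      unfolding vV[symmetric] act_vec[OF assms(1,3,2) qV] act_vec[OF assms(1,4,2) qA1] ..
    also have "\<dots> = vec n (\<lambda>s. DO_apply b Jm (DO_apply a Jp V) (int s + 1))" using H by simp
    also have "\<dots> = DO_mat n b Jm z *\<^sub>v (DO_mat n a Jp z *\<^sub>v v)"
      unfolding vV[symmetric] act_vec[OF assms(1,4,2) qV] act_vec[OF assms(1,3,2) qA2] ..
    also have "\<dots> = (DO_mat n b Jm z * DO_mat n a Jp z) *\<^sub>v v"
      using v by (simp add: assoc_mult_mat_vec[OF DO_mat_carrier DO_mat_carrier v])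
    finally show ?thesis .
  qed
  have c1: "DO_mat n b Jp z * DO_mat n a Jm z \<in> carrier_mat n n"
    using DO_mat_carrier by (metis mult_carrier_mat)
  have c2: "DO_mat n b Jm z * DO_mat n a Jp z \<in> carrier_mat n n"
    using DO_mat_carrier by (metis mult_carrier_mat)
  show ?thesis
  proof (rule eq_matI)
    fix i j assume ij: "i < dim_row (DO_mat n b Jm z * DO_mat n a Jp z)" "j < dim_col (DO_mat n b Jm z * DO_mat n a Jp z)"
    then have "i < n" "j < n" using c2 by auto
    then show "(DO_mat n b Jp z * DO_mat n a Jm z) $$ (i, j) = (DO_mat n b Jm z * DO_mat n a Jp z) $$ (i, j)"
      using vv[of "unit_vec n j"] mat_entry_unit[OF c1] mat_entry_unit[OF c2] by (metis unit_vec_carrier)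
  qed (use c1 c2 in auto)
qed

lemma inv_refac:
  fixes A B Ap Bp :: "real mat"
  assumes "A \<in> carrier_mat n n" "B \<in> carrier_mat n n" "Ap \<in> carrier_mat n n" "Bp \<in> carrier_mat n n"
    "invertible_mat A" "invertible_mat B" "Bp * A = B * Ap"
  shows "mat_inv B * Bp = Ap * mat_inv A"
proof -
  have inv: "mat_inv M \<in> carrier_mat n n \<and> M * mat_inv M = 1\<^sub>m n \<and> mat_inv M * M = 1\<^sub>m n"
    if M: "M \<in> carrier_mat n n" "invertible_mat M" for M :: "real mat"
  proof -
    have ex: "\<exists>X. inverts_mat M X \<and> inverts_mat X M" using M unfolding invertible_mat_def by blast
    have "inverts_mat M (mat_inv M) \<and> inverts_mat (mat_inv M) M"
      unfolding mat_inv_def by (rule someI_ex[OF ex])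
    then have 1: "M * mat_inv M = 1\<^sub>m n" and 2: "mat_inv M * M = 1\<^sub>m (dim_row (mat_inv M))"
      using M unfolding inverts_mat_def by auto
    have "dim_col (mat_inv M) = n" using 1 by (metis index_mult_mat(3) index_one_mat(3))
    moreover have "dim_row (mat_inv M) = n" using 2 M
      by (metis carrier_matD(2) index_mult_mat(3) index_one_mat(3))
    ultimately show ?thesis using 1 2 by auto
  qed
  obtain Ai where Ai: "Ai \<in> carrier_mat n n" "A * Ai = 1\<^sub>m n" and AiD: "Ai = mat_inv A" using inv[OF assms(1,5)] by blast
  obtain Bi where Bi: "Bi \<in> carrier_mat n n" "Bi * B = 1\<^sub>m n" and BiD: "Bi = mat_inv B" using inv[OF assms(2,6)] by blast
  have "Bi * Bp = Bi * Bp * (A * Ai)" using Ai Bi assms by simp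
  also have "\<dots> = Bi * (Bp * (A * Ai))" using Ai Bi assms by (intro assoc_mult_mat) auto
  also have "Bp * (A * Ai) = (Bp * A) * Ai" using Ai Bi assms by (intro assoc_mult_mat[symmetric]) auto
  also have "\<dots> = (B * Ap) * Ai" using assms by simp
  also have "\<dots> = B * (Ap * Ai)" using Ai Bi assms by (intro assoc_mult_mat) auto
  also have "Bi * (B * (Ap * Ai)) = (Bi * B) * (Ap * Ai)" using Ai Bi assms by (intro assoc_mult_mat[symmetric]) auto
  also have "\<dots> = Ap * Ai" using Ai Bi assms by simp
  finally show ?thesis using AiD BiD by simp
qed



lemma powi_prod:
  fixes z :: real
  assumes "z \<noteq> 0" "finite I"
  shows "(\<Prod>i\<in>I. z powi e i) = z powi (\<Sum>i\<in>I. e i)"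
  using assms(2)
proof (induction I rule: finite_induct)
  case empty then show ?case by simp
next
  case (insert x F)
  then show ?case using assms(1) by (simp add: power_int_add)
qed

lemma det_laurent:
  fixes a :: "int \<Rightarrow> int \<Rightarrow> real"
  assumes n1: "n \<ge> 1" and fin: "finite S" and ne: "S \<noteq> {}" and nz: "\<forall>i. a (Min S) i \<noteq> 0"
  shows "finite {z. z \<noteq> 0 \<and> det (DO_mat n a S z) = 0}"
proof -
  define jm where "jm = Min S"
  define P where "P = {\<sigma>. \<sigma> permutes {0..<n}}"
  define F where "F = (\<lambda>i s. {j\<in>S. (int i + j - int s) mod int n = 0})"
  define G where "G = (\<lambda>\<sigma>. PiE {0..<n} (\<lambda>i. F i (\<sigma> i)))"
  define E where "E = (\<lambda>\<sigma> (g::nat\<Rightarrow>int). \<Sum>i\<in>{0..<n}. (int i + g i - int (\<sigma> i)) div int n)"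
  define c where "c = (\<lambda>\<sigma> (g::nat\<Rightarrow>int). (signof \<sigma> :: real) * (\<Prod>i\<in>{0..<n}. a (g i) (int i + 1)))"
  define p where "p = (\<Sum>\<sigma>\<in>P. \<Sum>g\<in>G \<sigma>. monom (c \<sigma> g) (nat (E \<sigma> g - jm)))"
  have finP: "finite P" unfolding P_def by (rule finite_permutations) simp
  have finF: "finite (F i s)" for i s unfolding F_def using fin by simp
  have finG: "finite (G \<sigma>)" for \<sigma> unfolding G_def by (rule finite_PiE) (simp_all add: finF)
  have jmS: "jm \<in> S" unfolding jm_def using fin ne by simp
  have jmle: "jm \<le> j" if "j \<in> S" for j unfolding jm_def using fin that by simp
  have detz: "det (DO_mat n a S z) = (\<Sum>\<sigma>\<in>P. \<Sum>g\<in>G \<sigma>. c \<sigma> g * z powi E \<sigma> g)" if z: "z \<noteq> 0" for z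
  proof -
    have "det (DO_mat n a S z) = (\<Sum>\<sigma>\<in>P. signof \<sigma> * (\<Prod>i = 0..<n. DO_mat n a S z $$ (i, \<sigma> i)))"
      unfolding P_def by (rule det_def'[OF DO_mat_carrier])
    also have "\<dots> = (\<Sum>\<sigma>\<in>P. \<Sum>g\<in>G \<sigma>. c \<sigma> g * z powi E \<sigma> g)"
    proof (rule sum.cong[OF refl])
      fix \<sigma> assume s: "\<sigma> \<in> P"
      then have perm: "\<sigma> permutes {0..<n}" unfolding P_def by simp
      have "(\<Prod>i = 0..<n. DO_mat n a S z $$ (i, \<sigma> i))
          = (\<Prod>i = 0..<n. \<Sum>j\<in>F i (\<sigma> i). a j (int i + 1) * z powi ((int i + j - int (\<sigma> i)) div int n))"
      proof (rule prod.cong[OF refl])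
        fix i assume "i \<in> {0..<n}"
        then have "i < n" "\<sigma> i < n" using permutes_in_image[OF perm] by auto
        then show "DO_mat n a S z $$ (i, \<sigma> i) = (\<Sum>j\<in>F i (\<sigma> i). a j (int i + 1) * z powi ((int i + j - int (\<sigma> i)) div int n))"
          unfolding DO_mat_def F_def by simp
      qed
      also have "\<dots> = (\<Sum>g\<in>G \<sigma>. \<Prod>i\<in>{0..<n}. a (g i) (int i + 1) * z powi ((int i + g i - int (\<sigma> i)) div int n))"
        unfolding G_def by (rule prod_sum_PiE) (simp_all add: finF)
      also have "\<dots> = (\<Sum>g\<in>G \<sigma>. (\<Prod>i\<in>{0..<n}. a (g i) (int i + 1)) * z powi E \<sigma> g)"
        unfolding E_def by (simp add: prod.distrib powi_prod[OF z])
      finally show "signof \<sigma> * (\<Prod>i = 0..<n. DO_mat n a S z $$ (i, \<sigma> i)) = (\<Sum>g\<in>G \<sigma>. c \<sigma> g * z powi E \<sigma> g)"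
        unfolding c_def by (simp add: sum_distrib_left mult.assoc)
    qed
    finally show ?thesis .
  qed
  have nE: "int n * E \<sigma> g = (\<Sum>i\<in>{0..<n}. g i)" if s: "\<sigma> \<in> P" "g \<in> G \<sigma>" for \<sigma> g
  proof -
    have perm: "\<sigma> permutes {0..<n}" using s unfolding P_def by simp
    have dv: "int n dvd (int i + g i - int (\<sigma> i))" if "i \<in> {0..<n}" for i
      using s(2) that unfolding G_def F_def PiE_def Pi_def by (auto simp: mod_0_imp_dvd)
    have "int n * E \<sigma> g = (\<Sum>i\<in>{0..<n}. int n * ((int i + g i - int (\<sigma> i)) div int n))"
      unfolding E_def by (simp add: sum_distrib_left)
    also have "\<dots> = (\<Sum>i\<in>{0..<n}. int i + g i - int (\<sigma> i))"
      using dv by (intro sum.cong refl) simp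
    also have "\<dots> = (\<Sum>i\<in>{0..<n}. int i) + (\<Sum>i\<in>{0..<n}. g i) - (\<Sum>i\<in>{0..<n}. int (\<sigma> i))"
      by (simp add: sum.distrib sum_subtractf)
    also have "(\<Sum>i\<in>{0..<n}. int (\<sigma> i)) = (\<Sum>i\<in>{0..<n}. int i)"
      by (rule sum.reindex_bij_betw[OF permutes_imp_bij[OF perm]])
    finally show ?thesis by simp
  qed
  have Ege: "jm \<le> E \<sigma> g \<and> (E \<sigma> g = jm \<longrightarrow> (\<forall>i<n. g i = jm))" if s: "\<sigma> \<in> P" "g \<in> G \<sigma>" for \<sigma> g
  proof -
    have gS: "g i \<in> S" if "i < n" for i using s(2) that unfolding G_def F_def PiE_def Pi_def by auto
    have "(\<Sum>i\<in>{0..<n}. jm) \<le> (\<Sum>i\<in>{0..<n}. g i)" using gS jmle by (intro sum_mono) auto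
    then have "int n * jm \<le> int n * E \<sigma> g" using nE[OF s] by simp
    then have ge: "jm \<le> E \<sigma> g" using n1 by (simp add: mult_le_cancel_left)
    have "\<forall>i<n. g i = jm" if eq: "E \<sigma> g = jm"
    proof -
      have "(\<Sum>i\<in>{0..<n}. g i - jm) = (\<Sum>i\<in>{0..<n}. g i) - int n * jm" by (simp add: sum_subtractf)
      also have "\<dots> = 0" using nE[OF s] eq by simp
      finally have "\<forall>i\<in>{0..<n}. g i - jm = 0"
        using sum_nonneg_eq_0_iff[of "{0..<n}" "\<lambda>i. g i - jm"] gS jmle by auto
      then show ?thesis by auto
    qed
    then show ?thesis using ge by blast
  qed
  have polyz: "poly p z = det (DO_mat n a S z) * z powi (- jm)" if z: "z \<noteq> 0" for z
  proof -
    have "poly p z = (\<Sum>\<sigma>\<in>P. \<Sum>g\<in>G \<sigma>. c \<sigma> g * z ^ nat (E \<sigma> g - jm))"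
      unfolding p_def by (simp add: poly_sum poly_monom)
    also have "\<dots> = (\<Sum>\<sigma>\<in>P. \<Sum>g\<in>G \<sigma>. c \<sigma> g * z powi E \<sigma> g * z powi (- jm))"
    proof (intro sum.cong refl)
      fix \<sigma> g assume s: "\<sigma> \<in> P" "g \<in> G \<sigma>"
      have "z ^ nat (E \<sigma> g - jm) = z powi (E \<sigma> g - jm)"
        using Ege[OF s] by (simp add: power_int_def)
      also have "\<dots> = z powi E \<sigma> g * z powi (- jm)"
        using z by (simp add: power_int_add[symmetric])
      finally show "c \<sigma> g * z ^ nat (E \<sigma> g - jm) = c \<sigma> g * z powi E \<sigma> g * z powi (- jm)" by simp
    qed
    also have "\<dots> = det (DO_mat n a S z) * z powi (- jm)"
      unfolding detz[OF z] by (simp add: sum_distrib_right)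
    finally show ?thesis .
  qed
  define \<sigma>0 where "\<sigma>0 = (\<lambda>i. if i < n then nat ((int i + jm) mod int n) else i)"
  define g0 where "g0 = restrict (\<lambda>_. jm) {0..<n}"
  have s0i: "int (\<sigma>0 i) = (int i + jm) mod int n" "\<sigma>0 i < n" if "i < n" for i
    using that n1 unfolding \<sigma>0_def by (auto simp: nat_less_iff)
  have s0P: "\<sigma>0 \<in> P"
  proof -
    have inj: "inj_on \<sigma>0 {0..<n}"
    proof (rule inj_onI)
      fix i i' assume "i \<in> {0..<n}" "i' \<in> {0..<n}" "\<sigma>0 i = \<sigma>0 i'"
      then have lt: "i < n" "i' < n" and "(int i + jm) mod int n = (int i' + jm) mod int n"
        using s0i by (auto, metis)
      then have "int n dvd (int i + jm) - (int i' + jm)" by (simp add: mod_eq_dvd_iff)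
      then have "int n dvd int i - int i'" by simp
      then have "int i mod int n = int i' mod int n" by (simp add: mod_eq_dvd_iff)
      then show "i = i'" using lt by simp
    qed
    have img: "\<sigma>0 ` {0..<n} \<subseteq> {0..<n}" using s0i by auto
    have bij: "bij_betw \<sigma>0 {0..<n} {0..<n}"
      unfolding bij_betw_def using inj endo_inj_surj[OF _ img inj] by simp
    have fx: "\<sigma>0 x = x" if "x \<notin> {0..<n}" for x using that unfolding \<sigma>0_def by simp
    have "\<sigma>0 permutes {0..<n}" by (rule bij_imp_permutes[OF bij fx])
    then show ?thesis unfolding P_def by simp
  qed
  have g0G: "g0 \<in> G \<sigma>0"
    unfolding G_def g0_def
  proof (rule restrict_PiE_iff[THEN iffD2], intro ballI)
    fix i assume "i \<in> {0..<n}"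
    then have i: "i < n" by simp
    have "(int i + jm - int (\<sigma>0 i)) mod int n = 0"
      by (simp only: s0i[OF i] mod_diff_right_eq) simp
    then show "jm \<in> F i (\<sigma>0 i)" unfolding F_def using jmS by simp
  qed
  have key: "c \<sigma> g * 0 ^ nat (E \<sigma> g - jm) = (if \<sigma> = \<sigma>0 \<and> g = g0 then c \<sigma>0 g0 else 0)"
    if s: "\<sigma> \<in> P" "g \<in> G \<sigma>" for \<sigma> g
  proof (cases "E \<sigma> g = jm")
    case True
    then have gi: "\<forall>i<n. g i = jm" using Ege[OF s] by blast
    have "g = g0"
    proof
      fix i show "g i = g0 i"
      proof (cases "i < n")
        case True then show ?thesis using gi unfolding g0_def by simp
      next
        case False then show ?thesis using s(2) unfolding G_def g0_def PiE_def extensional_def by auto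
      qed
    qed
    moreover have "\<sigma> = \<sigma>0"
    proof
      fix i show "\<sigma> i = \<sigma>0 i"
      proof (cases "i < n")
        case True
        have perm: "\<sigma> permutes {0..<n}" using s unfolding P_def by simp
        have lt: "\<sigma> i < n" using permutes_in_image[OF perm] True by simp
        have "(int i + jm - int (\<sigma> i)) mod int n = 0"
          using s(2) True gi unfolding G_def F_def PiE_def Pi_def by auto
        then have "int n dvd (int i + jm - int (\<sigma> i))" by (simp add: mod_0_imp_dvd)
        then have "int (\<sigma> i) mod int n = (int i + jm) mod int n"
          by (simp add: mod_eq_dvd_iff dvd_diff_commute)
        then have "int (\<sigma> i) = int (\<sigma>0 i)" using lt s0i[OF True] by simp
        then show ?thesis by simp
      next
        case False
        have perm: "\<sigma> permutes {0..<n}" using s unfolding P_def by simp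
        then show ?thesis using False permutes_not_in[OF perm] unfolding \<sigma>0_def by simp
      qed
    qed
    ultimately show ?thesis using True by simp
  next
    case False
    then have gt: "nat (E \<sigma> g - jm) \<noteq> 0" using Ege[OF s] by simp
    have "\<not> (\<sigma> = \<sigma>0 \<and> g = g0)"
    proof
      assume "\<sigma> = \<sigma>0 \<and> g = g0"
      then have e: "\<sigma> = \<sigma>0" "g = g0" by auto
      have "int n * E \<sigma> g = int n * jm" using nE[OF s] unfolding e g0_def by simp
      then have "E \<sigma> g = jm" using n1 by simp
      then show False using False by simp
    qed
    moreover have "(0::real) ^ nat (E \<sigma> g - jm) = 0" using gt by simp
    ultimately show ?thesis by (simp only: if_False mult_zero_right)
  qed
  have c0: "c \<sigma>0 g0 \<noteq> 0"
  proof -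
    have "(signof \<sigma>0 :: real) \<noteq> 0" by (simp add: sign_def)
    moreover have "(\<Prod>i\<in>{0..<n}. a (g0 i) (int i + 1)) \<noteq> 0"
      using nz unfolding g0_def jm_def by simp
    ultimately show ?thesis unfolding c_def by simp
  qed
  have "poly p 0 = (\<Sum>\<sigma>\<in>P. \<Sum>g\<in>G \<sigma>. c \<sigma> g * 0 ^ nat (E \<sigma> g - jm))"
    unfolding p_def by (simp add: poly_sum poly_monom)
  also have "\<dots> = (\<Sum>\<sigma>\<in>P. if \<sigma> = \<sigma>0 then c \<sigma>0 g0 else 0)"
  proof (intro sum.cong refl)
    fix \<sigma> assume s: "\<sigma> \<in> P"
    have "(\<Sum>g\<in>G \<sigma>. c \<sigma> g * 0 ^ nat (E \<sigma> g - jm)) = (\<Sum>g\<in>G \<sigma>. if \<sigma> = \<sigma>0 \<and> g = g0 then c \<sigma>0 g0 else 0)"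
      using key[OF s] by (intro sum.cong refl) simp
    also have "\<dots> = (if \<sigma> = \<sigma>0 then c \<sigma>0 g0 else 0)"
    proof (cases "\<sigma> = \<sigma>0")
      case True then show ?thesis using g0G finG by (simp add: sum.delta')
    next
      case False then show ?thesis by simp
    qed
    finally show "(\<Sum>g\<in>G \<sigma>. c \<sigma> g * 0 ^ nat (E \<sigma> g - jm)) = (if \<sigma> = \<sigma>0 then c \<sigma>0 g0 else 0)" .
  qed
  also have "\<dots> = c \<sigma>0 g0" using s0P finP by (simp add: sum.delta')
  finally have "poly p 0 \<noteq> 0" using c0 by simp
  then have "p \<noteq> 0" by auto
  then have "finite {z. poly p z = 0}" by (rule poly_roots_finite)
  moreover have "{z. z \<noteq> 0 \<and> det (DO_mat n a S z) = 0} \<subseteq> {z. poly p z = 0}"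
    using polyz by auto
  ultimately show ?thesis by (rule finite_subset[rotated])
qed



lemma det_nz_invertible:
  fixes A :: "real mat"
  assumes "A \<in> carrier_mat n n" "det A \<noteq> 0"
  shows "invertible_mat A"
proof -
  have "A \<in> Units (ring_mat TYPE(real) n ())" by (rule det_non_zero_imp_unit[OF assms])
  then obtain B where B: "B \<in> carrier_mat n n" "B * A = 1\<^sub>m n" "A * B = 1\<^sub>m n"
    unfolding Units_def ring_mat_def by auto
  show ?thesis unfolding invertible_mat_def inverts_mat_def square_mat.simps
    using assms(1) B by (intro conjI exI[of _ B]) auto
qed

lemma coeff_nonzero:
  assumes "finite J" "corresponds_generic n J a" "j0 \<in> J"
  shows "a j0 i \<noteq> 0"
proof
  assume z0: "a j0 i = 0"
  define m where "m = nat (Max J - Min J)"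
  from assms(2) obtain V where gen: "generic_corrugated m J V"
     and ann: "\<forall>k < m. \<forall>i. DO_apply a J (\<lambda>l. V l $ k) i = 0"
     and nz: "\<forall>i. \<exists>j\<in>J. a j i \<noteq> 0" unfolding corresponds_generic_def m_def by blast
  from nz obtain j1 where j1: "j1 \<in> J" "a j1 i \<noteq> 0" by blast
  have ne: "j1 \<noteq> j0" using j1 z0 by auto
  have "lin_dep_family m (J - {j0}) (\<lambda>j. V (i + j))"
    unfolding lin_dep_family_def
  proof (intro exI[of _ "\<lambda>j. a j i"] conjI allI impI)
    show "\<exists>j\<in>J - {j0}. a j i \<noteq> 0" using j1 ne by blast
    fix k assume k: "k < m"
    have "(\<Sum>j\<in>J - {j0}. a j i * (V (i + j) $ k)) = (\<Sum>j\<in>J. a j i * (V (i + j) $ k))"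
      using sum.remove[OF assms(1) assms(3), of "\<lambda>j. a j i * (V (i + j) $ k)"] z0 by simp
    also have "\<dots> = DO_apply a J (\<lambda>l. V l $ k) i" unfolding DO_apply_def by simp
    also have "\<dots> = 0" using ann k by blast
    finally show "(\<Sum>j\<in>J - {j0}. a j i * (V (i + j) $ k)) = 0" .
  qed
  then show False using gen assms(3) unfolding generic_corrugated_def by blast
qed

lemma arith_prog_fin:
  assumes "arith_prog A k" shows "finite A" "A \<noteq> {}"
proof -
  obtain a0 and p :: nat where p: "p \<ge> 1" "A = {a0 + int m * k | m. m < p}"
    using assms unfolding arith_prog_def by blast
  have "A = (\<lambda>m. a0 + int m * k) ` {..<p}" using p by auto
  then show "finite A" by simp
  have "a0 + int 0 * k \<in> A" using p by (auto intro!: exI[of _ 0])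
  then show "A \<noteq> {}" by auto
qed

theorem mainTheorem8:
  fixes n :: nat and Jm Jp :: "int set" and k :: int
    and a b :: "int \<Rightarrow> int \<Rightarrow> real"
  assumes "n \<ge> 1"
    and "k > 0" and "arith_prog Jm k" and "arith_prog Jp k"
    and "Jm \<inter> Jp = {}"
    and "periodic_coeffs n a" and "periodic_coeffs n b"
    and "corresponds_generic n (Jm \<union> Jp) a"
    and "\<forall>V. DO_apply b Jp (DO_apply a Jm V) = DO_apply b Jm (DO_apply a Jp V)"
  shows "finite {z. z \<noteq> 0 \<and> \<not> invertible_mat (DO_mat n a Jm z)}
    \<and> (\<forall>z. z \<noteq> 0 \<and> invertible_mat (DO_mat n a Jm z) \<and> invertible_mat (DO_mat n b Jm z) \<longrightarrow>
         mat_inv (DO_mat n b Jm z) * DO_mat n b Jp z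
           = DO_mat n a Jp z * mat_inv (DO_mat n a Jm z))"
proof
  have fm: "finite Jm" "Jm \<noteq> {}" using arith_prog_fin[OF assms(3)] by auto
  have fp: "finite Jp" using arith_prog_fin[OF assms(4)] by auto
  have "Min Jm \<in> Jm \<union> Jp" using fm by simp
  then have nz: "\<forall>i. a (Min Jm) i \<noteq> 0"
    using coeff_nonzero[OF _ assms(8)] fm fp by blast
  have "finite {z. z \<noteq> 0 \<and> det (DO_mat n a Jm z) = 0}"
    using det_laurent[of n Jm a, OF assms(1) fm(1) fm(2) nz] .
  moreover have "{z. z \<noteq> 0 \<and> \<not> invertible_mat (DO_mat n a Jm z)} \<subseteq> {z. z \<noteq> 0 \<and> det (DO_mat n a Jm z) = 0}"
    using det_nz_invertible[OF DO_mat_carrier] by blast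
  ultimately show "finite {z. z \<noteq> 0 \<and> \<not> invertible_mat (DO_mat n a Jm z)}" by (rule finite_subset[rotated])
  show "\<forall>z. z \<noteq> 0 \<and> invertible_mat (DO_mat n a Jm z) \<and> invertible_mat (DO_mat n b Jm z) \<longrightarrow>
         mat_inv (DO_mat n b Jm z) * DO_mat n b Jp z
           = DO_mat n a Jp z * mat_inv (DO_mat n a Jm z)"
  proof (intro allI impI, elim conjE)
    fix z :: real assume z: "z \<noteq> 0" and iA: "invertible_mat (DO_mat n a Jm z)" and iB: "invertible_mat (DO_mat n b Jm z)"
    have eq: "DO_mat n b Jp z * DO_mat n a Jm z = DO_mat n b Jm z * DO_mat n a Jp z"
      by (rule refac_mat[OF assms(1) z fm(1) fp assms(6,7,9)])
    show "mat_inv (DO_mat n b Jm z) * DO_mat n b Jp z = DO_mat n a Jp z * mat_inv (DO_mat n a Jm z)"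
      by (rule inv_refac[OF DO_mat_carrier DO_mat_carrier DO_mat_carrier DO_mat_carrier iA iB eq])
  qed
qed

end
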